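(* Let $n\ge 1$ be an integer and let $x,\tilde x\in\{0,1\}^n$ with $|x|_1\le|\tilde x|_1$. Let $y$ and $\tilde y$ be random points of $\{0,1\}^n$ obtained from $x$ and $\tilde x$, respectively, by flipping each bit independently with probability $1/n$. Then for every $j\in\{0,\dots,|x|_1-1\}$, $$\Pr\big[|y|_1=j\big]\ge\Pr\big[|\tilde y|_1=j\big].$$
   Context: $|x|_1=\sum_{i=1}^n x_i$ denotes the number of one-bits of $x\in\{0,1\}^n$. *)

theory Defs
  imports "HOL-Probability.Probability"
begin

text \<open>Bit strings in {0,1}^n are modelled as bool lists of length n (True = one-bit).\<close>

definition ones :: "bool list \<Rightarrow> nat" where
  "ones xs = length (filter id xs)"

fun mutate :: "real \<Rightarrow> bool list \<Rightarrow> bool list pmf" where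
  "mutate p [] = return_pmf []"
| "mutate p (b # bs) =
     bind_pmf (bernoulli_pmf p) (\<lambda>f.
     bind_pmf (mutate p bs) (\<lambda>ys. return_pmf ((if f then \<not> b else b) # ys)))"

end

theory Submission
  imports Defs
begin


definition addbit :: "real \<Rightarrow> (nat \<Rightarrow> real) \<Rightarrow> nat \<Rightarrow> real" where
  "addbit r f j = (1 - r) * f j + r * (if j = 0 then 0 else f (j - 1))"

definition D :: "real \<Rightarrow> bool list \<Rightarrow> nat pmf" where
  "D p x = map_pmf ones (mutate p x)"

lemma ones_Cons: "ones (c # ys) = (if c then Suc (ones ys) else ones ys)"
  by (simp add: ones_def)

lemma pmf_Suc: "pmf (map_pmf Suc M) j = (if j = 0 then 0 else pmf M (j - 1))"
proof (cases j)
  case 0 then show ?thesis by (auto intro!: pmf_map_outside)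
next
  case (Suc i) then show ?thesis using pmf_map_inj'[of Suc M i] by simp
qed

lemma D_Cons:
  assumes "0 \<le> p" "p \<le> 1"
  shows "pmf (D p (b # bs)) j = addbit (if b then 1 - p else p) (pmf (D p bs)) j"
proof -
  have "D p (b # bs) = bind_pmf (bernoulli_pmf p) (\<lambda>f.
      map_pmf (\<lambda>c. if (if f then \<not> b else b) then Suc c else c) (D p bs))"
    by (simp add: D_def map_bind_pmf map_return_pmf pmf.map_comp o_def ones_Cons
          map_pmf_def[symmetric] cong: if_cong)
  then have "pmf (D p (b # bs)) j = p * pmf (map_pmf (\<lambda>c. if \<not> b then Suc c else c) (D p bs)) j
      + (1 - p) * pmf (map_pmf (\<lambda>c. if b then Suc c else c) (D p bs)) j"
    using assms by (simp add: pmf_bind algebra_simps)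
  then show ?thesis
    by (cases b) (simp_all add: addbit_def pmf_Suc algebra_simps)
qed



definition delta :: "nat \<Rightarrow> real" where "delta j = (if j = 0 then 1 else 0)"

lemma addbit_comm: "addbit r (addbit s f) = addbit s (addbit r f)"
proof
  fix j show "addbit r (addbit s f) j = addbit s (addbit r f) j"
    by (cases "j = 0"; cases "j = 1") (auto simp: addbit_def algebra_simps)
qed

lemma funpow_comm: "(addbit s ^^ a) (addbit r f) = addbit r ((addbit s ^^ a) f)"
  by (induction a) (simp_all add: addbit_comm)

lemma D_Nil: "pmf (D p []) = delta"
  by (auto simp: D_def delta_def fun_eq_iff indicator_def ones_def)

lemma ones_le: "ones x \<le> length x"
  by (simp add: ones_def)

lemma D_eq:
  assumes "0 \<le> p" "p \<le> 1"
  shows "pmf (D p x) = (addbit (1-p) ^^ ones x) ((addbit p ^^ (length x - ones x)) delta)"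
proof (induction x)
  case Nil then show ?case by (simp add: D_Nil ones_def)
next
  case (Cons b bs)
  have le: "ones bs \<le> length bs" by (rule ones_le)
  show ?case
  proof (cases b)
    case True
    show ?thesis
    proof
      fix j show "pmf (D p (b # bs)) j = (addbit (1 - p) ^^ ones (b # bs)) ((addbit p ^^ (length (b # bs) - ones (b # bs))) delta) j"
        using assms True by (simp add: D_Cons ones_Cons Cons.IH)
    qed
  next
    case False
    then have "length (b # bs) - ones (b # bs) = Suc (length bs - ones bs)"
      using le by (simp add: ones_Cons)
    then show ?thesis using assms False
      by (intro ext) (simp add: D_Cons ones_Cons Cons.IH funpow_comm)
  qed
qed

lemma bin_eq:
  assumes "0 \<le> q" "q \<le> 1"
  shows "(addbit q ^^ k) delta = pmf (binomial_pmf k q)"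
proof (induction k)
  case 0 then show ?case using assms
    by (simp add: binomial_pmf_0 fun_eq_iff delta_def indicator_def)
next
  case (Suc k)
  show ?case
  proof
    fix j
    have "pmf (binomial_pmf (Suc k) q) j =
       q * pmf (map_pmf Suc (binomial_pmf k q)) j + (1 - q) * pmf (binomial_pmf k q) j"
    proof -
      have e: "binomial_pmf (Suc k) q = bernoulli_pmf q \<bind> (\<lambda>b. if b then map_pmf Suc (binomial_pmf k q) else binomial_pmf k q)"
        using assms unfolding binomial_pmf_Suc[of q k, OF atLeastAtMost_iff[THEN iffD2, OF conjI[OF assms]]]
        by (intro bind_pmf_cong) (auto simp: map_pmf_def bind_return_pmf')
      show ?thesis unfolding e using assms by (simp add: pmf_bind del: pmf_binomial)
    qed
    then show "(addbit q ^^ Suc k) delta j = pmf (binomial_pmf (Suc k) q) j"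
      by (simp only: funpow.simps o_apply Suc.IH) (simp add: addbit_def pmf_Suc del: pmf_binomial)
  qed
qed



definition monoupto :: "(nat \<Rightarrow> real) \<Rightarrow> nat \<Rightarrow> bool" where
  "monoupto f J \<longleftrightarrow> (\<forall>j. 1 \<le> j \<and> j \<le> J \<longrightarrow> f (j - 1) \<le> f j)"

lemma addbit_nonneg: "\<lbrakk>0 \<le> r; r \<le> 1; \<forall>i. 0 \<le> f i\<rbrakk> \<Longrightarrow> 0 \<le> addbit r f j"
  by (simp add: addbit_def)

lemma funpow_nonneg: "\<lbrakk>0 \<le> r; r \<le> 1; \<forall>i. 0 \<le> f i\<rbrakk> \<Longrightarrow> 0 \<le> (addbit r ^^ m) f j"
  by (induction m arbitrary: j) (auto intro!: addbit_nonneg)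

lemma addbit_mono:
  assumes "0 \<le> r" "r \<le> 1" "\<forall>i. 0 \<le> f i" "monoupto f J"
  shows "monoupto (addbit r f) J"
  unfolding monoupto_def
proof (intro allI impI)
  fix j assume j: "1 \<le> j \<and> j \<le> J"
  have a: "f (j - 1) \<le> f j" using assms(4) j by (auto simp: monoupto_def)
  show "addbit r f (j - 1) \<le> addbit r f j"
  proof (cases "j = 1")
    case True
    have "(1 - r) * f 0 \<le> (1 - r) * f 1" using a assms True by (simp add: mult_left_mono)
    moreover have "0 \<le> r * f 0" using assms by simp
    ultimately show ?thesis using True by (simp add: addbit_def)
  next
    case False
    then have "1 \<le> j - 1 \<and> j - 1 \<le> J" using j by auto
    then have "f (j - 1 - 1) \<le> f (j - 1)" using assms(4) unfolding monoupto_def by blast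
    then have b: "f (j - 2) \<le> f (j - 1)" by (simp add: numeral_2_eq_2)
    have "(1 - r) * f (j - 1) \<le> (1 - r) * f j" using a assms by (simp add: mult_left_mono)
    moreover have "r * f (j - 2) \<le> r * f (j - 1)" using b assms by (simp add: mult_left_mono)
    ultimately show ?thesis using False j
      by (simp add: addbit_def numeral_2_eq_2)
  qed
qed

lemma funpow_mono:
  assumes "0 \<le> r" "r \<le> 1" "\<forall>i. 0 \<le> f i" "monoupto f J"
  shows "monoupto ((addbit r ^^ m) f) J"
  by (induction m) (use assms in \<open>auto intro!: addbit_mono funpow_nonneg\<close>)

lemma binom_ratio: "i < k \<Longrightarrow> real (k choose Suc i) * real (Suc i) = real (k choose i) * real (k - i)"
proof -
  assume "i < k"
  have "(k - i) * (k choose i) = k * ((k - 1) choose i)" by (rule binomial_absorb_comp)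
  moreover have "Suc i * (k choose Suc i) = k * ((k - 1) choose i)"
    using times_binomial_minus1_eq[of "Suc i" k] by simp
  ultimately have "(k choose Suc i) * Suc i = (k choose i) * (k - i)" by (simp add: mult.commute)
  then show ?thesis by (metis of_nat_mult)
qed

lemma bin_mono:
  assumes n: "n \<ge> 2" and k: "k \<le> n - 1"
  shows "monoupto (pmf (binomial_pmf k (1 - 1 / real n))) k"
  unfolding monoupto_def
proof (intro allI impI)
  fix j assume j: "1 \<le> j \<and> j \<le> k"
  define i where "i = j - 1"
  have ik: "i < k" and ji: "j = Suc i" using j by (auto simp: i_def)
  define q :: real where "q = 1 - 1 / real n"
  define p :: real where "p = 1 / real n"
  have qp: "1 - q = p" by (simp add: q_def p_def)
  have p0: "p > 0" using n by (simp add: p_def)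
  have q0: "q > 0" using n by (simp add: q_def)
  have key: "real (Suc i) * p \<le> real (k - i) * q"
  proof -
    have "real (Suc i) \<le> real (k - i) * (real n - 1)"
    proof -
      have "1 * (n - 1) \<le> (k - i) * (n - 1)" using ik by (intro mult_right_mono) auto
      then have "Suc i \<le> (k - i) * (n - 1)" using ik k by linarith
      then have "real (Suc i) \<le> real ((k - i) * (n - 1))" by (simp only: of_nat_le_iff)
      then show ?thesis using n ik by (simp add: of_nat_diff)
    qed
    then have h: "real (Suc i) / real n \<le> real (k - i) * (real n - 1) / real n"
      by (rule divide_right_mono) simp
    have e1: "real (k - i) * q = real (k - i) * (real n - 1) / real n"
    proof -
      have "1 - 1 / real n = (real n - 1) / real n" using n by (simp add: field_simps)
      then show ?thesis by (simp add: q_def)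
    qed
    have e2: "real (Suc i) * p = real (Suc i) / real n" by (simp add: p_def)
    show ?thesis using h e1 e2 by (simp only:)
  qed
  have cmp: "real (k choose i) * p \<le> real (k choose Suc i) * q"
  proof -
    have "real (k choose i) * p * real (Suc i) \<le> real (k choose i) * (real (k - i) * q)"
      using mult_left_mono[OF key, of "real (k choose i)"] by (simp add: algebra_simps)
    also have "\<dots> = real (k choose Suc i) * q * real (Suc i)"
      using binom_ratio[OF ik] by (simp add: algebra_simps)
    finally show ?thesis by simp
  qed
  have e1: "p ^ (k - i) = p * p ^ (k - Suc i)" using ik
    by (metis Suc_diff_Suc power_Suc)
  have "real (k choose i) * q ^ i * p ^ (k - i) = (real (k choose i) * p) * (q ^ i * p ^ (k - Suc i))"
    by (simp add: e1 algebra_simps)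
  also have "\<dots> \<le> (real (k choose Suc i) * q) * (q ^ i * p ^ (k - Suc i))"
    using cmp p0 q0 by (intro mult_right_mono) auto
  also have "\<dots> = real (k choose Suc i) * q ^ Suc i * p ^ (k - Suc i)"
    by (simp add: algebra_simps)
  finally have fin: "real (k choose i) * q ^ i * p ^ (k - i) \<le> real (k choose Suc i) * q ^ Suc i * p ^ (k - Suc i)" .
  have "pmf (binomial_pmf k q) i \<le> pmf (binomial_pmf k q) (Suc i)"
  proof -
    have q1: "q \<le> 1" using p0 qp by simp
    have pi: "pmf (binomial_pmf k q) m = real (k choose m) * q ^ m * p ^ (k - m)" for m
      using pmf_binomial[of q k m] q0 q1 qp by simp
    show ?thesis unfolding pi using fin by simp
  qed
  then show "pmf (binomial_pmf k (1 - 1 / real n)) (j - 1) \<le> pmf (binomial_pmf k (1 - 1 / real n)) j"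
    using ji unfolding q_def by simp
qed



definition G :: "real \<Rightarrow> nat \<Rightarrow> nat \<Rightarrow> nat \<Rightarrow> real" where
  "G p a c = (addbit (1 - p) ^^ a) ((addbit p ^^ c) delta)"

lemma funpow_comm2: "(addbit s ^^ a) ((addbit r ^^ c) f) = (addbit r ^^ c) ((addbit s ^^ a) f)"
  by (induction c) (simp_all add: funpow_comm)

lemma G_step:
  assumes n: "n \<ge> 2" and k: "k + 1 \<le> n" and j: "j \<le> k"
  shows "G (1 / real n) (k + 1) (n - (k + 1)) j \<le> G (1 / real n) k (n - k) j"
proof -
  define p :: real where "p = 1 / real n"
  have p0: "0 \<le> p" and p1: "p \<le> 1 / 2" using n by (auto simp: p_def field_simps)
  define Z where "Z = (addbit (1 - p) ^^ k) ((addbit p ^^ (n - (k + 1))) delta)"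
  have nk: "n - k = Suc (n - (k + 1))" using k by simp
  have e1: "G p k (n - k) = addbit p Z"
    unfolding G_def Z_def nk by (simp add: funpow_comm)
  have e2: "G p (k + 1) (n - (k + 1)) = addbit (1 - p) Z"
    unfolding G_def Z_def by simp
  have Zc: "Z = (addbit p ^^ (n - (k + 1))) (pmf (binomial_pmf k (1 - 1 / real n)))"
  proof -
    have "Z = (addbit p ^^ (n - (k + 1))) ((addbit (1 - p) ^^ k) delta)"
      unfolding Z_def by (rule funpow_comm2)
    also have "(addbit (1 - p) ^^ k) delta = pmf (binomial_pmf k (1 - p))"
      using p0 p1 by (intro bin_eq) auto
    finally show ?thesis by (simp add: p_def)
  qed
  have Zm: "monoupto Z k"
    unfolding Zc using p0 p1 bin_mono[OF n] k by (intro funpow_mono) auto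
  have Zn: "0 \<le> Z i" for i
    unfolding Zc using p0 p1 by (intro funpow_nonneg) auto
  have d: "(if j = 0 then 0 else Z (j - 1)) \<le> Z j"
    using Zm Zn j by (auto simp: monoupto_def)
  have "addbit p Z j - addbit (1 - p) Z j = (1 - 2 * p) * (Z j - (if j = 0 then 0 else Z (j - 1)))"
    by (simp add: addbit_def algebra_simps)
  also have "\<dots> \<ge> 0" using d p1 by (intro mult_nonneg_nonneg) auto
  finally show ?thesis using e1 e2 by (simp add: p_def)
qed

lemma G_chain:
  assumes n: "n \<ge> 2" and "k + d \<le> n" and "j < k"
  shows "G (1 / real n) (k + d) (n - (k + d)) j \<le> G (1 / real n) k (n - k) j"
  using assms(2)
proof (induction d)
  case 0 then show ?case by simp
next
  case (Suc d)
  have "G (1 / real n) (k + Suc d) (n - (k + Suc d)) j \<le> G (1 / real n) (k + d) (n - (k + d)) j"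
    using G_step[OF n, of "k + d" j] Suc.prems assms(3) by simp
  then show ?case using Suc by simp
qed

lemma prob_eq:
  assumes "0 \<le> p" "p \<le> 1"
  shows "measure_pmf.prob (mutate p x) {y. ones y = j} = G p (ones x) (length x - ones x) j"
proof -
  have "measure_pmf.prob (mutate p x) {y. ones y = j} = pmf (D p x) j"
    by (simp add: D_def pmf_map vimage_def)
  then show ?thesis using D_eq[OF assms, of x] by (simp add: G_def)
qed

theorem lemma9:
  fixes n :: nat and x x' :: "bool list" and j :: nat
  assumes "n \<ge> 1"
    and "length x = n" and "length x' = n"
    and "ones x \<le> ones x'"
    and "j < ones x"
  shows "measure_pmf.prob (mutate (1 / real n) x) {y. ones y = j}
         \<ge> measure_pmf.prob (mutate (1 / real n) x') {y. ones y = j}"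
proof -
  have p: "0 \<le> 1 / real n" "1 / real n \<le> 1" using assms(1) by auto
  have le: "ones x' \<le> n" using ones_le[of x'] assms(3) by simp
  show ?thesis
  proof (cases "n = 1")
    case True
    then have "ones x = ones x'" using assms le by linarith
    then show ?thesis using prob_eq[OF p] assms by simp
  next
    case False
    then have n2: "n \<ge> 2" using assms(1) by simp
    obtain d where d: "ones x' = ones x + d" using assms(4) le_Suc_ex by blast
    show ?thesis using G_chain[OF n2, of "ones x" d j] d le assms prob_eq[OF p] by simp
  qed
qed


end
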